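(* Let $A:\mathbb{R}^n\to\mathbb{R}^m$ be a bounded linear operator, let $u^\dagger\in\mathbb{R}^n$ with $v:=Au^\dagger$, let $\wp>0$ with $\|u^\dagger-\Psi(v)\|\le\wp$. Let $\{v^\delta\}_{\delta>0}$ be noisy data with $\|v^\delta-v\|\le\delta$, and assume $\|\Psi(v^\delta)-\Psi(v)\|\to0$ as $\delta\to0$. Assume $C:=\eta-\frac{\eta_1}{\tau}-\nu_0(\wp+\nu_1)-\eta_0\eta_1>0$. Let $k_\delta$ be the discrepancy stopping index of the IRMGL+$\Psi$ iteration with noisy data $v^\delta$. Then there exists a solution $u^\dagger$ of $Au=v$ such that $$\lim_{\delta\to0}\|u_{k_\delta}^\delta-u^\dagger\|=0.$$
   Context: All norms are Euclidean, $A^*=A^\top$. Vectors $u\in\mathbb{R}^n$ are images: $n=pq$, pixel set $S=\{(i,j):1\le i\le p,1\le j\le q\}$, $u$ identified with $u:S\to\mathbb{R}$. Graph Laplacian built from $u$: fix $R>0$, $\sigma>0$, a distance $\eth$ on $S$; $g(a,b)=1$ if $0<\eth(a,b)\le R$, else $0$; $h_u(a,b)=\exp(-|u(a)-u(b)|^2/\sigma)$; $w_u=g\,h_u$; $W_u=[w_u(a,b)]$, $D_u=\mathrm{diag}(\sum_b w_u(a,b))$, $\Delta_u=D_u-W_u$. Noisy iteration: for a map $\Psi:\mathbb{R}^m\to\mathbb{R}^n$, $u_0^\delta=\Psi(v^\delta)$, $u_{k+1}^\delta=u_k^\delta-\alpha_k^\delta A^*(Au_k^\delta-v^\delta)-\beta_k^\delta\Delta_{u_k^\delta}u_k^\delta$,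 with constants $\eta_0,\eta_1,\nu_0,\nu_1,\nu_2>0$, $\alpha_k^\delta=\min\{\eta_0\|Au_k^\delta-v^\delta\|^2/\|A^*(Au_k^\delta-v^\delta)\|^2,\eta_1\}$ ($=\eta_1$ if the denominator vanishes), $\beta_k^\delta=\min\{\nu_0\|Au_k^\delta-v^\delta\|^2/\|\Delta_{u_k^\delta}u_k^\delta\|,\nu_1/\|\Delta_{u_k^\delta}u_k^\delta\|,\nu_2\}$ if $\Delta_{u_k^\delta}u_k^\delta\ne0$, else $0$. $\eta$ is a fixed constant with $0<\eta\le\min\{\eta_0/\|A\|^2,\eta_1\}$. With fixed $\tau>1$, $k_\delta=\min\{k\ge0:\|Au_k^\delta-v^\delta\|\le\tau\delta\}$. *)

theory Defs
  imports "HOL-Analysis.Analysis"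
begin

text \<open>Images are vectors indexed by the pixel set S = 'p \<times> 'q (two finite types,
  p = CARD('p), q = CARD('q)).  The linear operator A is a
  matrix, its adjoint is transpose A.\<close>

definition gl_weight ::
  "('s \<Rightarrow> 's \<Rightarrow> real) \<Rightarrow> real \<Rightarrow> real \<Rightarrow> real^'s \<Rightarrow> 's \<Rightarrow> 's \<Rightarrow> real" where
  "gl_weight eth R sig u a b =
     (if 0 < eth a b \<and> eth a b \<le> R then 1 else 0) * exp (- (\<bar>u $ a - u $ b\<bar>^2) / sig)"

definition gl_W :: "('s::finite \<Rightarrow> 's \<Rightarrow> real) \<Rightarrow> real \<Rightarrow> real \<Rightarrow> real^'s \<Rightarrow> real^'s^'s" where
  "gl_W eth R sig u = (\<chi> a b. gl_weight eth R sig u a b)"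

definition gl_D :: "('s::finite \<Rightarrow> 's \<Rightarrow> real) \<Rightarrow> real \<Rightarrow> real \<Rightarrow> real^'s \<Rightarrow> real^'s^'s" where
  "gl_D eth R sig u = (\<chi> a b. if a = b then (\<Sum>c\<in>UNIV. gl_weight eth R sig u a c) else 0)"

definition gl_Lap :: "('s::finite \<Rightarrow> 's \<Rightarrow> real) \<Rightarrow> real \<Rightarrow> real \<Rightarrow> real^'s \<Rightarrow> real^'s^'s" where
  "gl_Lap eth R sig u = gl_D eth R sig u - gl_W eth R sig u"

definition irmgl_alpha :: "real^'n::finite^'m::finite \<Rightarrow> real \<Rightarrow> real \<Rightarrow> real^'m \<Rightarrow> real^'n \<Rightarrow> real" where
  "irmgl_alpha A eta0 eta1 vd u =
     (let r = A *v u - vd; g = transpose A *v r in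
      if norm g = 0 then eta1 else min (eta0 * (norm r)^2 / (norm g)^2) eta1)"

definition irmgl_beta ::
  "real^('s::finite)^'m::finite \<Rightarrow> ('s \<Rightarrow> 's \<Rightarrow> real) \<Rightarrow> real \<Rightarrow> real \<Rightarrow> real \<Rightarrow> real \<Rightarrow> real
     \<Rightarrow> real^'m \<Rightarrow> real^'s \<Rightarrow> real" where
  "irmgl_beta A eth R sig nu0 nu1 nu2 vd u =
     (let r = A *v u - vd; L = gl_Lap eth R sig u *v u in
      if L = 0 then 0 else min (min (nu0 * (norm r)^2 / norm L) (nu1 / norm L)) nu2)"

primrec irmgl ::
  "real^('s::finite)^'m::finite \<Rightarrow> (real^'m \<Rightarrow> real^'s) \<Rightarrow> ('s \<Rightarrow> 's \<Rightarrow> real) \<Rightarrow> real \<Rightarrow> real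
     \<Rightarrow> real \<Rightarrow> real \<Rightarrow> real \<Rightarrow> real \<Rightarrow> real \<Rightarrow> real^'m \<Rightarrow> nat \<Rightarrow> real^'s" where
  "irmgl A Psi eth R sig eta0 eta1 nu0 nu1 nu2 vd 0 = Psi vd"
| "irmgl A Psi eth R sig eta0 eta1 nu0 nu1 nu2 vd (Suc k) =
     (let u = irmgl A Psi eth R sig eta0 eta1 nu0 nu1 nu2 vd k in
      u - irmgl_alpha A eta0 eta1 vd u *\<^sub>R (transpose A *v (A *v u - vd))
        - irmgl_beta A eth R sig nu0 nu1 nu2 vd u *\<^sub>R (gl_Lap eth R sig u *v u))"

definition irmgl_stop ::
  "real^('s::finite)^'m::finite \<Rightarrow> (real^'m \<Rightarrow> real^'s) \<Rightarrow> ('s \<Rightarrow> 's \<Rightarrow> real) \<Rightarrow> real \<Rightarrow> real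
     \<Rightarrow> real \<Rightarrow> real \<Rightarrow> real \<Rightarrow> real \<Rightarrow> real \<Rightarrow> real^'m \<Rightarrow> real \<Rightarrow> real \<Rightarrow> nat" where
  "irmgl_stop A Psi eth R sig eta0 eta1 nu0 nu1 nu2 vd tau delta =
     (LEAST k. norm (A *v irmgl A Psi eth R sig eta0 eta1 nu0 nu1 nu2 vd k - vd) \<le> tau * delta)"

end

theory Submission
  imports Defs
begin


lemma tendsto_if_const:
  "(c \<Longrightarrow> (f \<longlongrightarrow> a) F) \<Longrightarrow> (\<not> c \<Longrightarrow> (g \<longlongrightarrow> b) F) \<Longrightarrow>
   ((\<lambda>x. if c then f x else g x) \<longlongrightarrow> (if c then a else b)) F"
  by (cases c) auto

lemma Lap_tendsto:
  fixes X :: "'a \<Rightarrow> real^'s::finite"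
  assumes "(X \<longlongrightarrow> u) F" and sg: "sig \<noteq> 0"
  shows "((\<lambda>x. gl_Lap eth R sig (X x) *v X x) \<longlongrightarrow> gl_Lap eth R sig u *v u) F"
proof (rule vec_tendstoI)
  fix i
  show "((\<lambda>x. (gl_Lap eth R sig (X x) *v X x) $ i) \<longlongrightarrow> (gl_Lap eth R sig u *v u) $ i) F"
    unfolding matrix_vector_mult_def gl_Lap_def gl_D_def gl_W_def gl_weight_def
    by (simp add: divide_inverse, intro tendsto_intros tendsto_if_const assms sg)
qed

lemma inner_transpose: "inner (transpose A *v r) e = inner r ((A::real^'n::finite^'m::finite) *v e)"
  by (simp add: dot_lmul_matrix)



locale irm =
  fixes A :: "real^('s::finite)^'m::finite"
    and eth :: "'s \<Rightarrow> 's \<Rightarrow> real"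
    and R sig eta0 eta1 nu0 nu1 nu2 eta tau wp :: real
  assumes sigma_pos: "sig > 0"
    and eta0_pos: "eta0 > 0" and eta1_pos: "eta1 > 0"
    and nu0_pos: "nu0 > 0" and nu1_pos: "nu1 > 0" and nu2_pos: "nu2 > 0"
    and eta_pos: "eta > 0"
    and eta_le0: "eta * (onorm (\<lambda>x. A *v x))^2 \<le> eta0"
    and eta_le1: "eta \<le> eta1"
    and tau_gt1: "tau > 1"
    and wp_pos: "wp > 0"
    and C_pos: "eta - eta1 / tau - nu0 * (wp + nu1) - eta0 * eta1 > 0"
begin

definition "CC = eta - eta1 / tau - nu0 * (wp + nu1) - eta0 * eta1"
definition "gg vd u = transpose A *v (A *v u - vd)"
definition "LL u = gl_Lap eth R sig u *v u"
definition "al vd u = irmgl_alpha A eta0 eta1 vd u"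
definition "be vd u = irmgl_beta A eth R sig nu0 nu1 nu2 vd u"
definition "Fs vd u = u - al vd u *\<^sub>R gg vd u - be vd u *\<^sub>R LL u"

lemma CC_pos: "CC > 0" using C_pos by (simp add: CC_def)

lemma it_Suc: "irmgl A Psi eth R sig eta0 eta1 nu0 nu1 nu2 vd (Suc k)
   = Fs vd (irmgl A Psi eth R sig eta0 eta1 nu0 nu1 nu2 vd k)"
  by (simp add: Fs_def gg_def LL_def al_def be_def Let_def)

lemma norm_gg: "norm (gg vd u) \<le> onorm (\<lambda>x. A *v x) * norm (A *v u - vd)"
proof -
  define r where "r = A *v u - vd"
  define g where "g = transpose A *v r"
  have "norm g ^ 2 = inner g g" by (simp add: power2_norm_eq_inner)
  also have "\<dots> = inner r (A *v g)" unfolding g_def by (rule inner_transpose)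
  also have "\<dots> \<le> norm r * norm (A *v g)" by (rule norm_cauchy_schwarz)
  also have "\<dots> \<le> norm r * (onorm (\<lambda>x. A *v x) * norm g)"
    by (intro mult_left_mono onorm) auto
  finally have h: "norm g * norm g \<le> (onorm (\<lambda>x. A *v x) * norm r) * norm g"
    by (simp add: power2_eq_square algebra_simps)
  have "norm g \<le> onorm (\<lambda>x. A *v x) * norm r"
  proof (cases "norm g = 0")
    case True
    have "0 \<le> onorm (\<lambda>x. A *v x)" by (intro onorm_pos_le) auto
    then show ?thesis using True by simp
  next
    case False
    then have "norm g > 0" by simp
    with h show ?thesis by (simp add: mult_le_cancel_right)
  qed
  then show ?thesis by (simp add: gg_def g_def r_def)
qed

lemma alpha_facts:
  shows "0 \<le> al vd u" "al vd u \<le> eta1" "eta \<le> al vd u"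
    "al vd u * norm (gg vd u)^2 \<le> eta0 * norm (A *v u - vd)^2"
proof -
  define r where "r = A *v u - vd"
  define g where "g = gg vd u"
  have ng: "norm g \<le> onorm (\<lambda>x. A *v x) * norm r" using norm_gg by (simp add: g_def r_def)
  have "eta * norm g ^ 2 \<le> eta * (onorm (\<lambda>x. A *v x) * norm r) ^ 2"
    using ng eta_pos by (intro mult_left_mono power_mono) auto
  also have "\<dots> = (eta * onorm (\<lambda>x. A *v x) ^ 2) * norm r ^ 2" by (simp add: power_mult_distrib)
  also have "\<dots> \<le> eta0 * norm r ^ 2" using eta_le0 by (intro mult_right_mono) auto
  finally have key: "eta * norm g ^ 2 \<le> eta0 * norm r ^ 2" .
  have alv: "al vd u = (if norm g = 0 then eta1 else min (eta0 * (norm r)^2 / (norm g)^2) eta1)"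
    by (simp add: al_def irmgl_alpha_def Let_def g_def gg_def r_def)
  show "0 \<le> al vd u" using eta0_pos eta1_pos by (simp add: alv)
  show "al vd u \<le> eta1" by (simp add: alv)
  show "eta \<le> al vd u"
  proof (cases "norm g = 0")
    case True then show ?thesis using eta_le1 by (simp add: alv)
  next
    case False
    then have "norm g ^ 2 > 0" by simp
    then have "eta \<le> eta0 * (norm r)^2 / (norm g)^2" using key by (simp add: pos_le_divide_eq)
    then show ?thesis using False eta_le1 by (simp add: alv)
  qed
  show "al vd u * norm (gg vd u)^2 \<le> eta0 * norm (A *v u - vd)^2"
  proof (cases "norm g = 0")
    case True then show ?thesis using eta0_pos by (simp add: alv g_def)
  next
    case False
    then have p: "norm g ^ 2 > 0" by simp
    have "al vd u * norm g ^ 2 \<le> (eta0 * (norm r)^2 / (norm g)^2) * norm g ^ 2"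
      using False p by (intro mult_right_mono) (auto simp: alv)
    also have "\<dots> = eta0 * (norm r)^2" using p by simp
    finally show ?thesis by (simp add: g_def r_def)
  qed
qed

lemma beta_facts:
  shows "0 \<le> be vd u" "be vd u \<le> nu2" "be vd u * norm (LL u) \<le> nu0 * norm (A *v u - vd)^2"
    "be vd u * norm (LL u) \<le> nu1"
proof -
  define r where "r = A *v u - vd"
  define L where "L = LL u"
  have bev: "be vd u = (if L = 0 then 0 else min (min (nu0 * (norm r)^2 / norm L) (nu1 / norm L)) nu2)"
    by (simp add: be_def irmgl_beta_def Let_def L_def LL_def r_def)
  show "0 \<le> be vd u" using nu0_pos nu1_pos nu2_pos by (simp add: bev)
  show "be vd u \<le> nu2" using nu2_pos by (simp add: bev)
  show "be vd u * norm (LL u) \<le> nu0 * norm (A *v u - vd)^2"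
  proof (cases "L = 0")
    case True then show ?thesis using nu0_pos by (simp add: bev L_def)
  next
    case False
    then have p: "norm L > 0" by simp
    have "be vd u * norm L \<le> (nu0 * (norm r)^2 / norm L) * norm L"
      using False p by (intro mult_right_mono) (auto simp: bev)
    also have "\<dots> = nu0 * (norm r)^2" using p by simp
    finally show ?thesis by (simp add: L_def r_def)
  qed
  show "be vd u * norm (LL u) \<le> nu1"
  proof (cases "L = 0")
    case True then show ?thesis using nu1_pos by (simp add: bev L_def)
  next
    case False
    then have p: "norm L > 0" by simp
    have "be vd u * norm L \<le> (nu1 / norm L) * norm L"
      using False p by (intro mult_right_mono) (auto simp: bev)
    also have "\<dots> = nu1" using p by simp
    finally show ?thesis by (simp add: L_def r_def)
  qed
qed


lemma lin_comb: "(T::real) = E - 2 * P - 2 * Q + N \<Longrightarrow> N \<le> 2 * U + 2 * V \<Longrightarrow> U \<le> u1 \<Longrightarrow> V \<le> v1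
   \<Longrightarrow> p1 \<le> P \<Longrightarrow> q1 \<le> Q \<Longrightarrow> T \<le> E - 2 * p1 - 2 * q1 + 2 * u1 + 2 * v1"
  by linarith

lemma descent:
  assumes hA: "A *v uh = vv" and hd: "norm (vd - vv) \<le> d" and d0: "0 \<le> d"
    and hr: "tau * d \<le> norm (A *v u - vd)" and he: "norm (u - uh) \<le> wp"
  shows "norm (Fs vd u - uh)^2 \<le> norm (u - uh)^2 - 2 * CC * norm (A *v u - vd)^2"
proof -
  define e where "e = u - uh"
  define r where "r = A *v u - vd"
  define g where "g = gg vd u"
  define L where "L = LL u"
  define a where "a = al vd u"
  define b where "b = be vd u"
  define X where "X = norm r ^ 2"
  have a0: "0 \<le> a" and a1: "a \<le> eta1" and a2: "eta \<le> a" and a3: "a * norm g ^ 2 \<le> eta0 * X"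
    using alpha_facts[of vd u] by (simp_all add: a_def g_def X_def r_def)
  have b0: "0 \<le> b" and b1: "b * norm L \<le> nu0 * X" and b2: "b * norm L \<le> nu1"
    using beta_facts[of vd u] by (simp_all add: b_def L_def X_def r_def)
  have X0: "0 \<le> X" by (simp add: X_def)
  have Fe: "Fs vd u - uh = e - (a *\<^sub>R g + b *\<^sub>R L)"
    by (simp add: Fs_def e_def a_def b_def g_def L_def)
  have n1: "norm (e - (a *\<^sub>R g + b *\<^sub>R L))^2
      = norm e ^ 2 - 2 * (a * inner e g) - 2 * (b * inner e L) + norm (a *\<^sub>R g + b *\<^sub>R L)^2"
    by (simp add: power2_norm_eq_inner inner_diff_left inner_diff_right inner_add_left
        inner_add_right inner_commute algebra_simps)
  have "norm (a *\<^sub>R g + b *\<^sub>R L) \<le> a * norm g + b * norm L"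
    using norm_triangle_ineq[of "a *\<^sub>R g" "b *\<^sub>R L"] a0 b0 by simp
  then have "norm (a *\<^sub>R g + b *\<^sub>R L)^2 \<le> (a * norm g + b * norm L)^2"
    by (intro power_mono) auto
  also have "\<dots> \<le> 2 * (a * (a * norm g ^ 2)) + 2 * ((b * norm L) * (b * norm L))"
  proof -
    have "0 \<le> (a * norm g - b * norm L)^2" by simp
    then show ?thesis by (simp add: power2_eq_square algebra_simps)
  qed
  finally have n2: "norm (a *\<^sub>R g + b *\<^sub>R L)^2 \<le> 2 * (a * (a * norm g ^ 2)) + 2 * ((b * norm L) * (b * norm L))" .
  have aa: "a * (a * norm g ^ 2) \<le> eta1 * (eta0 * X)"
    using mult_mono[OF a1 a3] eta1_pos X0 eta0_pos a0 by simp
  have bb: "(b * norm L) * (b * norm L) \<le> nu1 * (nu0 * X)"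
    using mult_mono[OF b2 b1] b0 X0 nu0_pos nu1_pos by simp
  have Ae: "A *v e = r + (vd - vv)"
    by (simp add: e_def r_def matrix_vector_mult_diff_distrib hA)
  have ieg: "inner e g = X + inner (vd - vv) r"
    using inner_transpose[of A r e]
    by (simp add: g_def gg_def r_def[symmetric] inner_commute Ae inner_add_right X_def power2_norm_eq_inner)
  have "inner (vd - vv) r \<ge> - (norm (vd - vv) * norm r)"
    using Cauchy_Schwarz_ineq2[of "vd - vv" r] by linarith
  moreover have "norm (vd - vv) * norm r \<le> d * norm r" using hd by (intro mult_right_mono) auto
  moreover have "d * norm r \<le> X / tau"
  proof -
    have "tau * (d * norm r) \<le> norm r * norm r" using hr by (simp add: r_def mult_right_mono mult.assoc[symmetric])
    then show ?thesis using tau_gt1 by (simp add: X_def power2_eq_square pos_le_divide_eq mult.commute)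
  qed
  ultimately have ieg2: "inner e g \<ge> X - X / tau" using ieg by linarith
  have "a * inner e g \<ge> a * (X - X / tau)" using a0 ieg2 by (intro mult_left_mono)
  moreover have "a * (X - X / tau) \<ge> eta * X - eta1 * X / tau"
  proof -
    have "a * X \<ge> eta * X" using a2 X0 by (intro mult_right_mono)
    moreover have "a * X / tau \<le> eta1 * X / tau" using a1 X0 tau_gt1
      by (intro divide_right_mono mult_right_mono) auto
    ultimately show ?thesis by (simp add: right_diff_distrib)
  qed
  ultimately have T1: "a * inner e g \<ge> eta * X - eta1 * X / tau" by linarith
  have "b * inner e L \<ge> - (b * (norm e * norm L))"
  proof -
    have "- (norm e * norm L) \<le> inner e L" using Cauchy_Schwarz_ineq2[of e L] by linarith
    from mult_left_mono[OF this b0] show ?thesis by simp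
  qed
  moreover have "b * (norm e * norm L) \<le> wp * (nu0 * X)"
  proof -
    have "b * (norm e * norm L) = norm e * (b * norm L)" by simp
    also have "\<dots> \<le> wp * (nu0 * X)" using mult_mono[OF he[folded e_def] b1] b0 wp_pos by simp
    finally show ?thesis .
  qed
  ultimately have T2: "b * inner e L \<ge> - (wp * (nu0 * X))" by linarith
  have "norm (Fs vd u - uh)^2 \<le> norm e ^ 2 - 2 * (eta * X - eta1 * X / tau) + 2 * (wp * (nu0 * X))
      + 2 * (eta1 * (eta0 * X)) + 2 * (nu1 * (nu0 * X))"
  proof -
    have "norm (Fs vd u - uh)^2 = norm e ^ 2 - 2 * (a * inner e g) - 2 * (b * inner e L) + norm (a *\<^sub>R g + b *\<^sub>R L)^2"
      using Fe n1 by simp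
    from lin_comb[OF this n2 aa bb T1 T2] show ?thesis by simp
  qed
  also have "\<dots> = norm e ^ 2 - 2 * CC * X" by (simp add: CC_def algebra_simps)
  finally show ?thesis by (simp add: e_def X_def r_def)
qed


lemma fixed: "A *v u = vd \<Longrightarrow> Fs vd u = u"
  by (simp add: Fs_def gg_def be_def irmgl_beta_def Let_def nu1_pos nu2_pos)

lemma mv_tendsto: "(f \<longlongrightarrow> a) F \<Longrightarrow> ((\<lambda>x. (M::real^'n::finite^'k::finite) *v f x) \<longlongrightarrow> M *v a) F"
  by (rule bounded_linear.tendsto[OF matrix_vector_mul_bounded_linear])

lemma al_eq: "al vd u = (if norm (gg vd u) = 0 then eta1
   else min (eta0 * norm (A *v u - vd)^2 / norm (gg vd u)^2) eta1)"
  by (simp add: al_def irmgl_alpha_def Let_def gg_def)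

lemma be_eq: "be vd u = (if LL u = 0 then 0
   else min (min (nu0 * norm (A *v u - vd)^2 / norm (LL u)) (nu1 / norm (LL u))) nu2)"
  by (simp add: be_def irmgl_beta_def Let_def LL_def)

lemma Fs_tendsto:
  assumes X: "(X \<longlongrightarrow> u) F" and Y: "(Y \<longlongrightarrow> y) F"
  shows "((\<lambda>x. Fs (Y x) (X x)) \<longlongrightarrow> Fs y u) F"
proof -
  have G: "((\<lambda>x. gg (Y x) (X x)) \<longlongrightarrow> gg y u) F"
    unfolding gg_def by (intro mv_tendsto tendsto_intros X Y)
  have Lt: "((\<lambda>x. LL (X x)) \<longlongrightarrow> LL u) F"
    unfolding LL_def using sigma_pos by (intro Lap_tendsto X) auto
  have R: "((\<lambda>x. A *v X x - Y x) \<longlongrightarrow> A *v u - y) F"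
    by (intro mv_tendsto tendsto_intros X Y)
  have P1: "((\<lambda>x. al (Y x) (X x) *\<^sub>R gg (Y x) (X x)) \<longlongrightarrow> al y u *\<^sub>R gg y u) F"
  proof (cases "gg y u = 0")
    case True
    have "((\<lambda>x. al (Y x) (X x) *\<^sub>R gg (Y x) (X x)) \<longlongrightarrow> 0) F"
    proof (rule Lim_null_comparison)
      show "\<forall>\<^sub>F x in F. norm (al (Y x) (X x) *\<^sub>R gg (Y x) (X x)) \<le> eta1 * norm (gg (Y x) (X x))"
        using alpha_facts by (intro always_eventually allI) (simp add: mult_right_mono)
      show "((\<lambda>x. eta1 * norm (gg (Y x) (X x))) \<longlongrightarrow> 0) F"
        using tendsto_mult[OF tendsto_const tendsto_norm[OF G], of eta1] True by simp
    qed
    then show ?thesis using True by simp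
  next
    case False
    have ev: "\<forall>\<^sub>F x in F. gg (Y x) (X x) \<noteq> 0" using tendsto_imp_eventually_ne[OF G False] .
    have "((\<lambda>x. min (eta0 * norm (A *v X x - Y x)^2 / norm (gg (Y x) (X x))^2) eta1)
        \<longlongrightarrow> min (eta0 * norm (A *v u - y)^2 / norm (gg y u)^2) eta1) F"
      using False by (intro tendsto_intros R G) auto
    moreover have "al y u = min (eta0 * norm (A *v u - y)^2 / norm (gg y u)^2) eta1"
      using False by (simp add: al_eq)
    moreover have "\<forall>\<^sub>F x in F. min (eta0 * norm (A *v X x - Y x)^2 / norm (gg (Y x) (X x))^2) eta1
        = al (Y x) (X x)"
      using ev by (rule eventually_mono) (simp add: al_eq)
    ultimately have "((\<lambda>x. al (Y x) (X x)) \<longlongrightarrow> al y u) F"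
      by (auto intro: Lim_transform_eventually)
    then show ?thesis by (intro tendsto_scaleR G)
  qed
  have P2: "((\<lambda>x. be (Y x) (X x) *\<^sub>R LL (X x)) \<longlongrightarrow> be y u *\<^sub>R LL u) F"
  proof (cases "LL u = 0")
    case True
    have "((\<lambda>x. be (Y x) (X x) *\<^sub>R LL (X x)) \<longlongrightarrow> 0) F"
    proof (rule Lim_null_comparison)
      show "\<forall>\<^sub>F x in F. norm (be (Y x) (X x) *\<^sub>R LL (X x)) \<le> nu2 * norm (LL (X x))"
        using beta_facts by (intro always_eventually allI) (simp add: mult_right_mono)
      show "((\<lambda>x. nu2 * norm (LL (X x))) \<longlongrightarrow> 0) F"
        using tendsto_mult[OF tendsto_const tendsto_norm[OF Lt], of nu2] True by simp
    qed
    then show ?thesis using True by simp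
  next
    case False
    have ev: "\<forall>\<^sub>F x in F. LL (X x) \<noteq> 0" using tendsto_imp_eventually_ne[OF Lt False] .
    have "((\<lambda>x. min (min (nu0 * norm (A *v X x - Y x)^2 / norm (LL (X x))) (nu1 / norm (LL (X x)))) nu2)
        \<longlongrightarrow> min (min (nu0 * norm (A *v u - y)^2 / norm (LL u)) (nu1 / norm (LL u))) nu2) F"
      using False by (intro tendsto_intros R Lt) auto
    moreover have "be y u = min (min (nu0 * norm (A *v u - y)^2 / norm (LL u)) (nu1 / norm (LL u))) nu2"
      using False by (simp add: be_eq)
    moreover have "\<forall>\<^sub>F x in F. min (min (nu0 * norm (A *v X x - Y x)^2 / norm (LL (X x))) (nu1 / norm (LL (X x)))) nu2
        = be (Y x) (X x)"
      using ev by (rule eventually_mono) (simp add: be_eq)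
    ultimately have "((\<lambda>x. be (Y x) (X x)) \<longlongrightarrow> be y u) F"
      by (auto intro: Lim_transform_eventually)
    then show ?thesis by (intro tendsto_scaleR Lt)
  qed
  show ?thesis unfolding Fs_def by (intro tendsto_diff X P1 P2)
qed


lemma chain:
  assumes step: "\<And>k. z (Suc k) = Fs vd (z k)"
    and hA: "A *v uh = vv" and hd: "norm (vd - vv) \<le> d" and d0: "0 \<le> d"
    and hK: "norm (z K - uh) \<le> wp"
    and hres: "\<And>i. i < n \<Longrightarrow> tau * d \<le> norm (A *v z (K + i) - vd)"
  shows "i \<le> n \<Longrightarrow> norm (z (K + i) - uh)^2 + 2 * CC * (\<Sum>j<i. norm (A *v z (K + j) - vd)^2)
      \<le> norm (z K - uh)^2"
proof (induction i)
  case 0 then show ?case by simp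
next
  case (Suc i)
  have lt: "i < n" using Suc.prems by simp
  have IH: "norm (z (K + i) - uh)^2 + 2 * CC * (\<Sum>j<i. norm (A *v z (K + j) - vd)^2)
      \<le> norm (z K - uh)^2" using Suc.IH lt by simp
  have s0: "0 \<le> 2 * CC * (\<Sum>j<i. norm (A *v z (K + j) - vd)^2)"
    using CC_pos by (intro mult_nonneg_nonneg sum_nonneg) auto
  have "norm (z (K + i) - uh)^2 \<le> wp^2"
  proof -
    have "norm (z K - uh)^2 \<le> wp^2" by (rule power_mono[OF hK norm_ge_zero])
    then show ?thesis using IH s0 by linarith
  qed
  then have e: "norm (z (K + i) - uh) \<le> wp" by (rule power2_le_imp_le[OF _ less_imp_le[OF wp_pos]])
  have "norm (z (K + Suc i) - uh)^2 \<le> norm (z (K + i) - uh)^2 - 2 * CC * norm (A *v z (K + i) - vd)^2"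
  proof -
    have "z (K + Suc i) = Fs vd (z (K + i))" using step[of "K + i"] by simp
    then show ?thesis using descent[OF hA hd d0 hres[OF lt] e] by simp
  qed
  moreover have "(\<Sum>j<Suc i. norm (A *v z (K + j) - vd)^2)
     = (\<Sum>j<i. norm (A *v z (K + j) - vd)^2) + norm (A *v z (K + i) - vd)^2"
    by (rule sum.lessThan_Suc)
  ultimately show ?case using IH by (simp add: distrib_left)
qed


lemma noisefree:
  fixes Psi :: "real^'m \<Rightarrow> real^'s" and udag :: "real^'s"
  assumes init_close: "norm (udag - Psi (A *v udag)) \<le> wp"
  defines "w \<equiv> irmgl A Psi eth R sig eta0 eta1 nu0 nu1 nu2 (A *v udag)"
  obtains ustar where "A *v ustar = A *v udag" "w \<longlonglongrightarrow> ustar"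
proof -
  define v where "v = A *v udag"
  have wS: "\<And>k. w (Suc k) = Fs v (w k)" unfolding w_def v_def by (rule it_Suc)
  have w0: "norm (w 0 - udag) \<le> wp" using init_close by (simp add: w_def norm_minus_commute)
  have ch: "norm (w k - udag)^2 + 2 * CC * (\<Sum>j<k. norm (A *v w j - v)^2) \<le> norm (w 0 - udag)^2" for k
    using chain[of w v udag v 0 0 k k, OF wS] w0 by (simp add: v_def)
  have w0sq: "norm (w 0 - udag)^2 \<le> wp^2" by (rule power_mono[OF w0 norm_ge_zero])
  have sn: "0 \<le> (\<Sum>j<k. norm (A *v w j - v)^2)" for k by (intro sum_nonneg) auto
  have bnd: "norm (w k - udag) \<le> wp" for k
  proof -
    have "norm (w k - udag)^2 \<le> wp^2" using ch[of k] w0sq sn[of k] CC_pos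
      by (smt (verit) mult_nonneg_nonneg)
    then show ?thesis by (rule power2_le_imp_le[OF _ less_imp_le[OF wp_pos]])
  qed
  have "summable (\<lambda>j. norm (A *v w j - v)^2)"
  proof (rule bounded_imp_summable)
    fix n
    have "2 * CC * (\<Sum>j<Suc n. norm (A *v w j - v)^2) \<le> wp^2"
      using ch[of "Suc n"] w0sq by (smt (verit) zero_le_power2)
    then have "(\<Sum>j<Suc n. norm (A *v w j - v)^2) \<le> wp^2 / (2 * CC)"
      using CC_pos by (simp add: pos_le_divide_eq mult.commute)
    then show "(\<Sum>j\<le>n. norm (A *v w j - v)^2) \<le> wp^2 / (2 * CC)"
      by (simp add: lessThan_Suc_atMost)
  qed simp
  then have "(\<lambda>j. norm (A *v w j - v)^2) \<longlonglongrightarrow> 0" by (rule summable_LIMSEQ_zero)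
  then have "(\<lambda>j. sqrt (norm (A *v w j - v)^2)) \<longlonglongrightarrow> sqrt 0" by (rule tendsto_real_sqrt)
  then have "(\<lambda>j. norm (A *v w j - v)) \<longlonglongrightarrow> 0" by simp
  then have "(\<lambda>j. A *v w j - v) \<longlonglongrightarrow> 0" by (rule tendsto_norm_zero_cancel)
  then have Aw: "(\<lambda>j. A *v w j) \<longlonglongrightarrow> v" by (simp add: Lim_null[symmetric])
  have "\<forall>n. w n \<in> cball udag wp" using bnd by (simp add: dist_norm norm_minus_commute)
  from seq_compactE[OF compact_imp_seq_compact[OF compact_cball] this]
  obtain ustar r where sm: "strict_mono r" and wr: "(w \<circ> r) \<longlonglongrightarrow> ustar" by blast
  have "(\<lambda>n. A *v (w \<circ> r) n) \<longlonglongrightarrow> A *v ustar" by (rule mv_tendsto[OF wr])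
  moreover have "(\<lambda>n. A *v (w \<circ> r) n) \<longlonglongrightarrow> v"
    using LIMSEQ_subseq_LIMSEQ[OF Aw sm] by (simp add: o_def)
  ultimately have Au: "A *v ustar = v" by (rule LIMSEQ_unique)
  have "w \<longlonglongrightarrow> ustar"
  proof (rule LIMSEQ_I)
    fix e :: real assume e: "0 < e"
    define e' where "e' = min e wp"
    have e': "0 < e'" using e wp_pos by (simp add: e'_def)
    from LIMSEQ_D[OF wr e'] obtain N0 where N0: "\<And>n. n \<ge> N0 \<Longrightarrow> norm ((w \<circ> r) n - ustar) < e'" by blast
    define K where "K = r N0"
    have wK: "norm (w K - ustar) < e'" using N0[of N0] by (simp add: K_def)
    then have wK': "norm (w K - ustar) \<le> wp" by (simp add: e'_def)
    show "\<exists>N. \<forall>n\<ge>N. norm (w n - ustar) < e"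
    proof (intro exI allI impI)
      fix n assume "K \<le> n"
      then obtain i where ni: "n = K + i" using le_Suc_ex by blast
      have "norm (w (K + i) - ustar)^2 + 2 * CC * (\<Sum>j<i. norm (A *v w (K + j) - v)^2) \<le> norm (w K - ustar)^2"
        using chain[of w v ustar v 0 K i i, OF wS Au] wK' by simp
      moreover have "0 \<le> 2 * CC * (\<Sum>j<i. norm (A *v w (K + j) - v)^2)"
        using CC_pos by (intro mult_nonneg_nonneg sum_nonneg) auto
      ultimately have "norm (w (K + i) - ustar)^2 \<le> norm (w K - ustar)^2" by linarith
      then have "norm (w (K + i) - ustar) \<le> norm (w K - ustar)"
        by (rule power2_le_imp_le[OF _ norm_ge_zero])
      then show "norm (w n - ustar) < e" using wK ni by (simp add: e'_def)
    qed
  qed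
  then show ?thesis using that Au by (simp add: v_def)
qed


lemma main:
  fixes Psi :: "real^'m \<Rightarrow> real^'s" and udag :: "real^'s" and vdel :: "real \<Rightarrow> real^'m"
  assumes init_close: "norm (udag - Psi (A *v udag)) \<le> wp"
    and noise: "\<forall>delta > 0. norm (vdel delta - A *v udag) \<le> delta"
    and Psi_cont: "((\<lambda>delta. norm (Psi (vdel delta) - Psi (A *v udag))) \<longlongrightarrow> 0) (at_right 0)"
  shows "\<exists>u. A *v u = A *v udag \<and>
    ((\<lambda>delta. norm (irmgl A Psi eth R sig eta0 eta1 nu0 nu1 nu2 (vdel delta)
        (irmgl_stop A Psi eth R sig eta0 eta1 nu0 nu1 nu2 (vdel delta) tau delta) - u))
      \<longlongrightarrow> 0) (at_right 0)"
proof -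
  define v where "v = A *v udag"
  define w where "w = irmgl A Psi eth R sig eta0 eta1 nu0 nu1 nu2 (A *v udag)"
  obtain ustar where Au: "A *v ustar = v" and wl: "w \<longlonglongrightarrow> ustar"
    using noisefree[of udag Psi, OF init_close] unfolding w_def v_def by blast
  have wS: "\<And>k. w (Suc k) = Fs v (w k)" unfolding w_def v_def by (rule it_Suc)
  define ud where "ud delta k = irmgl A Psi eth R sig eta0 eta1 nu0 nu1 nu2 (vdel delta) k" for delta k
  have udS: "\<And>delta k. ud delta (Suc k) = Fs (vdel delta) (ud delta k)" unfolding ud_def by (rule it_Suc)
  have vt: "(vdel \<longlongrightarrow> v) (at_right 0)"
  proof -
    have "((\<lambda>d. vdel d - v) \<longlongrightarrow> 0) (at_right 0)"
    proof (rule Lim_null_comparison)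
      show "\<forall>\<^sub>F x in at_right 0. norm (vdel x - v) \<le> x"
        using eventually_at_right_less[of "0::real"]
      proof (rule eventually_mono)
        fix x :: real assume "0 < x"
        then show "norm (vdel x - v) \<le> x" using noise by (simp add: v_def)
      qed
      show "((\<lambda>x. x) \<longlongrightarrow> (0::real)) (at_right 0)" by (rule tendsto_ident_at)
    qed
    then show ?thesis by (simp add: Lim_null[symmetric])
  qed
  have Pt: "((\<lambda>d. Psi (vdel d)) \<longlongrightarrow> Psi v) (at_right 0)"
  proof -
    have "((\<lambda>d. Psi (vdel d) - Psi v) \<longlongrightarrow> 0) (at_right 0)"
      using Psi_cont unfolding v_def by (rule tendsto_norm_zero_cancel)
    then show ?thesis by (simp add: Lim_null[symmetric])
  qed
  have ut: "((\<lambda>d. ud d k) \<longlongrightarrow> w k) (at_right 0)" for k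
  proof (induction k)
    case 0
    have "(\<lambda>d. ud d 0) = (\<lambda>d. Psi (vdel d))" by (simp add: ud_def)
    moreover have "w 0 = Psi v" by (simp add: w_def v_def)
    ultimately show ?case using Pt by simp
  next
    case (Suc k)
    from Fs_tendsto[OF Suc vt] have "((\<lambda>d. Fs (vdel d) (ud d k)) \<longlongrightarrow> Fs v (w k)) (at_right 0)" .
    then show ?case by (simp only: udS wS)
  qed
  have fixw: "w j = ustar" if "A *v w j = v" for j
  proof -
    have c: "w (j + i) = w j" for i
    proof (induction i)
      case 0 then show ?case by simp
    next
      case (Suc i)
      have "w (j + Suc i) = Fs v (w (j + i))" using wS[of "j + i"] by simp
      also have "\<dots> = w j" using Suc fixed[OF that] by simp
      finally show ?case .
    qed
    have "(\<lambda>n. w (n + j)) \<longlonglongrightarrow> ustar" using LIMSEQ_ignore_initial_segment[OF wl, of j] .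
    moreover have "(\<lambda>n. w (n + j)) = (\<lambda>n. w j)" by (rule ext) (metis c add.commute)
    ultimately have "(\<lambda>n. w j) \<longlonglongrightarrow> ustar" by simp
    then show ?thesis by (rule LIMSEQ_const_iff[THEN iffD1])
  qed
  have conv: "((\<lambda>delta. norm (ud delta (LEAST k. norm (A *v ud delta k - vdel delta) \<le> tau * delta) - ustar))
      \<longlongrightarrow> 0) (at_right 0)"
  proof (rule tendstoI)
    fix e :: real assume e: "0 < e"
    define e' where "e' = min (e / 2) (wp / 2)"
    have e': "0 < e'" using e wp_pos by (simp add: e'_def)
    from LIMSEQ_D[OF wl e'] obtain K where K: "\<And>n. n \<ge> K \<Longrightarrow> norm (w n - ustar) < e'" by blast
    have E1: "\<forall>\<^sub>F d in at_right 0. 0 < (d::real)" by (rule eventually_at_right_less)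
    have E2: "\<forall>\<^sub>F d in at_right 0. norm (ud d K - w K) < e'"
      using tendstoD[OF ut[of K] e'] by (simp add: dist_norm)
    have E3: "\<forall>\<^sub>F d in at_right 0. \<forall>j\<in>{..<K}. norm (ud d j - w j) < e \<and>
        (A *v w j \<noteq> v \<longrightarrow> tau * d < norm (A *v ud d j - vdel d))"
    proof (rule eventually_ball_finite)
      show "finite {..<K}" by simp
      show "\<forall>j\<in>{..<K}. \<forall>\<^sub>F d in at_right 0. norm (ud d j - w j) < e \<and>
        (A *v w j \<noteq> v \<longrightarrow> tau * d < norm (A *v ud d j - vdel d))"
      proof
        fix j assume "j \<in> {..<K}"
        have a: "\<forall>\<^sub>F d in at_right 0. norm (ud d j - w j) < e"
          using tendstoD[OF ut[of j] e] by (simp add: dist_norm)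
        have b: "\<forall>\<^sub>F d in at_right 0. (A *v w j \<noteq> v \<longrightarrow> tau * d < norm (A *v ud d j - vdel d))"
        proof (cases "A *v w j = v")
          case True then show ?thesis by simp
        next
          case False
          have "((\<lambda>d. norm (A *v ud d j - vdel d) - tau * d) \<longlongrightarrow> norm (A *v w j - v) - tau * 0) (at_right 0)"
            by (intro tendsto_intros mv_tendsto ut vt tendsto_ident_at)
          moreover have "0 < norm (A *v w j - v) - tau * 0" using False by simp
          ultimately have "\<forall>\<^sub>F d in at_right 0. 0 < norm (A *v ud d j - vdel d) - tau * d"
            by (rule order_tendstoD(1))
          then show ?thesis by (rule eventually_mono) simp
        qed
        show "\<forall>\<^sub>F d in at_right 0. norm (ud d j - w j) < e \<and>
          (A *v w j \<noteq> v \<longrightarrow> tau * d < norm (A *v ud d j - vdel d))"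
          using eventually_conj[OF a b] .
      qed
    qed
    show "\<forall>\<^sub>F d in at_right 0. dist (norm (ud d (LEAST k. norm (A *v ud d k - vdel d) \<le> tau * d) - ustar)) 0 < e"
      using eventually_conj[OF E1 eventually_conj[OF E2 E3]]
    proof (rule eventually_mono, elim conjE)
      fix d :: real
      assume d0: "0 < d" and d2: "norm (ud d K - w K) < e'"
        and d3: "\<forall>j\<in>{..<K}. norm (ud d j - w j) < e \<and>
          (A *v w j \<noteq> v \<longrightarrow> tau * d < norm (A *v ud d j - vdel d))"
      define P where "P k \<longleftrightarrow> norm (A *v ud d k - vdel d) \<le> tau * d" for k
      define kd where "kd = (LEAST k. P k)"
      have "norm (ud d kd - ustar) < e"
      proof (cases "\<exists>j<K. P j")
        case True
        then obtain j where j: "j < K" "P j" by blast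
        have "kd \<le> j" unfolding kd_def using j(2) by (rule Least_le)
        have Pk: "P kd" unfolding kd_def using j(2) by (rule LeastI)
        have kK: "kd < K" using \<open>kd \<le> j\<close> j(1) by simp
        have kin: "kd \<in> {..<K}" using kK by simp
        have h3: "norm (ud d kd - w kd) < e \<and> (A *v w kd \<noteq> v \<longrightarrow> tau * d < norm (A *v ud d kd - vdel d))"
          using d3 kin by (rule bspec)
        have "A *v w kd = v"
        proof (rule ccontr)
          assume "A *v w kd \<noteq> v"
          with h3 have "tau * d < norm (A *v ud d kd - vdel d)" by blast
          with Pk show False by (simp add: P_def)
        qed
        then have "w kd = ustar" by (rule fixw)
        then show ?thesis using h3 by simp
      next
        case False
        have hnoise: "norm (vdel d - v) \<le> d" using noise d0 by (simp add: v_def)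
        have hK0: "norm (ud d K - ustar) < 2 * e'"
          using norm_triangle_ineq[of "ud d K - w K" "w K - ustar"] d2 K[of K] by simp
        then have hK: "norm (ud d K - ustar) \<le> wp" by (simp add: e'_def)
        have ex: "\<exists>M. P M"
        proof (rule ccontr)
          assume nP: "\<not> (\<exists>M. P M)"
          define c where "c = 2 * CC * (tau * d)^2"
          have c0: "0 < c" using CC_pos tau_gt1 d0 by (simp add: c_def)
          obtain n :: nat where n: "wp^2 / c < real n" using reals_Archimedean2 by blast
          have res: "tau * d \<le> norm (A *v ud d (K + i) - vdel d)" for i
          proof -
            have "\<not> P (K + i)" using nP by blast
            then show ?thesis by (simp add: P_def)
          qed
          have "norm (ud d (K + n) - ustar)^2 + 2 * CC * (\<Sum>j<n. norm (A *v ud d (K + j) - vdel d)^2)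
              \<le> norm (ud d K - ustar)^2"
            using chain[of "ud d" "vdel d" ustar v d K n n, OF udS Au hnoise _ hK res] d0 by simp
          moreover have "norm (ud d K - ustar)^2 \<le> wp^2" by (rule power_mono[OF hK norm_ge_zero])
          moreover have "real n * (tau * d)^2 \<le> (\<Sum>j<n. norm (A *v ud d (K + j) - vdel d)^2)"
          proof -
            have "(\<Sum>j<n. (tau * d)^2) \<le> (\<Sum>j<n. norm (A *v ud d (K + j) - vdel d)^2)"
              using res tau_gt1 d0 by (intro sum_mono power_mono) auto
            then show ?thesis by simp
          qed
          ultimately have "2 * CC * (real n * (tau * d)^2) \<le> wp^2"
            using mult_left_mono[of "real n * (tau * d)^2" _ "2 * CC"] CC_pos
            by (smt (verit) zero_le_power2)
          then have "real n * c \<le> wp^2" by (simp add: c_def algebra_simps)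
          then have "real n \<le> wp^2 / c" using c0 by (simp add: pos_le_divide_eq)
          then show False using n by simp
        qed
        have Pk: "P kd" unfolding kd_def using ex by (rule LeastI_ex)
        have kK: "K \<le> kd"
        proof (rule ccontr)
          assume "\<not> K \<le> kd"
          then have "kd < K" by simp
          with False Pk show False by blast
        qed
        have res: "tau * d \<le> norm (A *v ud d (K + i) - vdel d)" if "i < kd - K" for i
        proof -
          have "K + i < kd" using that by simp
          then have "\<not> P (K + i)" unfolding kd_def by (rule not_less_Least)
          then show ?thesis by (simp add: P_def)
        qed
        have "norm (ud d (K + (kd - K)) - ustar)^2 + 2 * CC * (\<Sum>j<kd - K. norm (A *v ud d (K + j) - vdel d)^2)
              \<le> norm (ud d K - ustar)^2"
          using chain[of "ud d" "vdel d" ustar v d K "kd - K" "kd - K", OF udS Au hnoise _ hK res] d0 by simp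
        moreover have "0 \<le> 2 * CC * (\<Sum>j<kd - K. norm (A *v ud d (K + j) - vdel d)^2)"
          using CC_pos by (intro mult_nonneg_nonneg sum_nonneg) auto
        ultimately have "norm (ud d (K + (kd - K)) - ustar)^2 \<le> norm (ud d K - ustar)^2" by linarith
        then have "norm (ud d (K + (kd - K)) - ustar) \<le> norm (ud d K - ustar)"
          by (rule power2_le_imp_le[OF _ norm_ge_zero])
        moreover have "K + (kd - K) = kd" using kK by simp
        ultimately have "norm (ud d kd - ustar) \<le> norm (ud d K - ustar)" by simp
        then show ?thesis using hK0 by (simp add: e'_def)
      qed
      then show "dist (norm (ud d (LEAST k. norm (A *v ud d k - vdel d) \<le> tau * d) - ustar)) 0 < e"
        by (simp add: kd_def P_def)
    qed
  qed
  have eqf: "(\<lambda>delta. norm (irmgl A Psi eth R sig eta0 eta1 nu0 nu1 nu2 (vdel delta)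
        (irmgl_stop A Psi eth R sig eta0 eta1 nu0 nu1 nu2 (vdel delta) tau delta) - ustar))
     = (\<lambda>delta. norm (ud delta (LEAST k. norm (A *v ud delta k - vdel delta) \<le> tau * delta) - ustar))"
    unfolding ud_def irmgl_stop_def by (rule refl)
  show ?thesis
  proof (intro exI conjI)
    show "A *v ustar = A *v udag" using Au by (simp add: v_def)
    show "((\<lambda>delta. norm (irmgl A Psi eth R sig eta0 eta1 nu0 nu1 nu2 (vdel delta)
        (irmgl_stop A Psi eth R sig eta0 eta1 nu0 nu1 nu2 (vdel delta) tau delta) - ustar)) \<longlongrightarrow> 0) (at_right 0)"
      unfolding eqf by (rule conv)
  qed
qed

end

theorem theorem3p13:
  fixes A :: "real^('p::finite \<times> 'q::finite)^'m::finite"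
    and Psi :: "real^'m \<Rightarrow> real^('p \<times> 'q)"
    and udag :: "real^('p \<times> 'q)"
    and vdel :: "real \<Rightarrow> real^'m"
    and eth :: "('p \<times> 'q) \<Rightarrow> ('p \<times> 'q) \<Rightarrow> real"
    and R sig eta0 eta1 nu0 nu1 nu2 eta tau wp :: real
  assumes eth_nonneg: "\<forall>a b. 0 \<le> eth a b"
    and eth_zero: "\<forall>a b. eth a b = 0 \<longleftrightarrow> a = b"
    and eth_sym: "\<forall>a b. eth a b = eth b a"
    and eth_tri: "\<forall>a b c. eth a c \<le> eth a b + eth b c"
    and R_pos: "R > 0" and sigma_pos: "sig > 0"
    and eta0_pos: "eta0 > 0" and eta1_pos: "eta1 > 0"
    and nu0_pos: "nu0 > 0" and nu1_pos: "nu1 > 0" and nu2_pos: "nu2 > 0"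
    and eta_pos: "eta > 0"
    and eta_le0: "eta * (onorm (\<lambda>x. A *v x))^2 \<le> eta0"
    and eta_le1: "eta \<le> eta1"
    and tau_gt1: "tau > 1"
    and wp_pos: "wp > 0"
    and init_close: "norm (udag - Psi (A *v udag)) \<le> wp"
    and noise: "\<forall>delta > 0. norm (vdel delta - A *v udag) \<le> delta"
    and Psi_cont: "((\<lambda>delta. norm (Psi (vdel delta) - Psi (A *v udag))) \<longlongrightarrow> 0) (at_right 0)"
    and C_pos: "eta - eta1 / tau - nu0 * (wp + nu1) - eta0 * eta1 > 0"
  shows "\<exists>u. A *v u = A *v udag \<and>
    ((\<lambda>delta. norm (irmgl A Psi eth R sig eta0 eta1 nu0 nu1 nu2 (vdel delta)
        (irmgl_stop A Psi eth R sig eta0 eta1 nu0 nu1 nu2 (vdel delta) tau delta) - u))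
      \<longlongrightarrow> 0) (at_right 0)"
  proof -
  interpret irm A eth R sig eta0 eta1 nu0 nu1 nu2 eta tau wp
    by unfold_locales (use assms in auto)
  show ?thesis by (rule main[OF init_close noise Psi_cont])
qed

end
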